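(* Let $k\ge 2$ be an integer and $n=6k$. There is no balanced permutation sequence of length $n$.
   Context: Let $n$ be a positive integer, $N$ a set of $n$ players and $[n]=\{1,\ldots,n\}$ a set of $n$ items. A permutation sequence of length $n$ is an ordered tuple $(\pi_1,\ldots,\pi_n)$ of bijections $\pi_t : N\to[n]$; on day $t$ player $i$ receives item $\pi_t(i)$. For $t\in[n]$ and $i\in N$, $Z_i^t$ is the multiset $\{\pi_1(i),\ldots,\pi_t(i)\}$, and for $j\in[t]$, $Z_i^t[j]$ is the $j$-th smallest element of $Z_i^t$ (counted with multiplicity). The sequence is called balanced if for every $t\in[n]$, every $i\in N$ and every $j\in[t]$: $Z_i^t[j]\le \lceil jn/t\rceil$. *)

theory Defs
  imports Complex_Main "HOL-Library.Multiset"
begin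

text \<open>Players form a finite set N, items are {1..n}. A permutation sequence of
length n is a map pi from days t (only t in {1..n} matter) to bijections N -> {1..n}.\<close>

definition perm_seq :: "'a set \<Rightarrow> nat \<Rightarrow> (nat \<Rightarrow> 'a \<Rightarrow> nat) \<Rightarrow> bool" where
  "perm_seq N n \<pi> \<longleftrightarrow> (\<forall>t\<in>{1..n}. bij_betw (\<pi> t) N {1..n})"

definition Zset :: "(nat \<Rightarrow> 'a \<Rightarrow> nat) \<Rightarrow> 'a \<Rightarrow> nat \<Rightarrow> nat multiset" where
  "Zset \<pi> i t = mset (map (\<lambda>s. \<pi> s i) [1..<Suc t])"

definition kth_smallest :: "nat multiset \<Rightarrow> nat \<Rightarrow> nat" where
  "kth_smallest M j = sorted_list_of_multiset M ! (j - 1)"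

definition balanced :: "'a set \<Rightarrow> nat \<Rightarrow> (nat \<Rightarrow> 'a \<Rightarrow> nat) \<Rightarrow> bool" where
  "balanced N n \<pi> \<longleftrightarrow> perm_seq N n \<pi> \<and>
     (\<forall>t\<in>{1..n}. \<forall>i\<in>N. \<forall>j\<in>{1..t}.
        int (kth_smallest (Zset \<pi> i t) j) \<le> \<lceil>real (j * n) / real t\<rceil>)"

end

theory Submission
  imports Defs
begin

lemma count_le:
  assumes "kth_smallest (Zset \<pi> i t) j \<le> c" "1 \<le> j" "j \<le> t"
  shows "j \<le> card {s\<in>{1..t}. \<pi> s i \<le> c}"
proof -
  define xs where "xs = sorted_list_of_multiset (Zset \<pi> i t)"
  have len: "length xs = t"
    unfolding xs_def Zset_def sorted_list_of_multiset_mset length_sort length_map length_upt by simp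
  have srt: "sorted xs" by (simp add: xs_def)
  have jc: "xs ! (j - 1) \<le> c" using assms(1) by (simp add: kth_smallest_def xs_def)
  have "{..<j} \<subseteq> {m. m < length xs \<and> xs ! m \<le> c}"
  proof
    fix m assume "m \<in> {..<j}"
    then have "m \<le> j - 1" "j - 1 < length xs" using assms len by auto
    then have "xs ! m \<le> xs ! (j - 1)" using srt by (simp add: sorted_nth_mono)
    then show "m \<in> {m. m < length xs \<and> xs ! m \<le> c}" using jc \<open>m \<le> j - 1\<close> \<open>j - 1 < length xs\<close> by auto
  qed
  then have "j \<le> card {m. m < length xs \<and> xs ! m \<le> c}"
    by (metis card_lessThan card_mono finite_Collect_conjI finite_Collect_less_nat)
  also have "\<dots> = length (filter (\<lambda>v. v \<le> c) xs)" by (simp add: length_filter_conv_card)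
  also have "\<dots> = size (filter_mset (\<lambda>v. v \<le> c) (mset xs))" by (metis mset_filter size_mset)
  also have "mset xs = Zset \<pi> i t" by (simp add: xs_def)
  also have "size (filter_mset (\<lambda>v. v \<le> c) (Zset \<pi> i t)) = length (filter (\<lambda>s. \<pi> s i \<le> c) [1..<Suc t])"
    by (simp only: Zset_def flip: mset_filter) (simp only: size_mset filter_map length_map comp_def)
  also have "\<dots> = card (set (filter (\<lambda>s. \<pi> s i \<le> c) [1..<Suc t]))"
    by (simp only: distinct_card distinct_filter distinct_upt)
  also have "set (filter (\<lambda>s. \<pi> s i \<le> c) [1..<Suc t]) = {s\<in>{1..t}. \<pi> s i \<le> c}"
    by auto
  finally show ?thesis .
qed

lemma day_card:
  assumes "perm_seq N n \<pi>" "s \<in> {1..n}" "A \<subseteq> {1..n}"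
  shows "card {i\<in>N. \<pi> s i \<in> A} = card A"
proof -
  have b: "bij_betw (\<pi> s) N {1..n}" using assms unfolding perm_seq_def by auto
  have "\<pi> s ` {i\<in>N. \<pi> s i \<in> A} = A" using b assms(3) unfolding bij_betw_def by auto
  moreover have "inj_on (\<pi> s) {i\<in>N. \<pi> s i \<in> A}" using b unfolding bij_betw_def by (auto intro: inj_on_subset)
  ultimately show ?thesis by (metis card_image)
qed

lemma sum_swap_card:
  assumes "finite N" "finite S"
  shows "(\<Sum>i\<in>N. card {s\<in>S. P s i}) = (\<Sum>s\<in>S. card {i\<in>N. P s i})"
proof -
  have "(\<Sum>i\<in>N. card {s\<in>S. P s i}) = (\<Sum>i\<in>N. \<Sum>s\<in>S. if P s i then 1 else 0)"
    using assms by (simp add: sum.If_cases Int_def)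
  also have "\<dots> = (\<Sum>s\<in>S. \<Sum>i\<in>N. if P s i then 1 else 0)" by (rule sum.swap)
  also have "\<dots> = (\<Sum>s\<in>S. card {i\<in>N. P s i})"
    using assms by (simp add: sum.If_cases Int_def)
  finally show ?thesis .
qed

lemma all_eq:
  fixes f :: "'a \<Rightarrow> nat"
  assumes "finite N" "sum f N = m * card N" "\<forall>i\<in>N. m \<le> f i" "i \<in> N"
  shows "f i = m"
proof -
  have "sum f N = sum (\<lambda>i. m + (f i - m)) N" using assms(3) by (intro sum.cong) auto
  also have "\<dots> = m * card N + sum (\<lambda>i. f i - m) N" by (simp add: sum.distrib)
  finally have "sum (\<lambda>i. f i - m) N = 0" using assms(2) by simp
  then have "f i - m = 0" using assms(1,4) by simp
  then show ?thesis using assms(3,4) by fastforce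
qed

lemma ceil_bound:
  assumes "int x \<le> \<lceil>real a / real b\<rceil>" "b > 0"
  shows "x * b < a + b"
proof -
  have "real x - 1 < real a / real b" using assms(1) le_ceiling_iff by (metis of_int_of_nat_eq)
  then have "(real x - 1) * real b < real a" using assms(2) by (simp add: pos_less_divide_eq)
  then have "real (x * b) < real (a + b)" by (simp add: algebra_simps)
  then show ?thesis by linarith
qed

lemma card_days:
  "card {s\<in>{1..2::nat}. P s} = of_bool (P 1) + of_bool (P 2)"
  "card {s\<in>{1..3::nat}. P s} = of_bool (P 1) + of_bool (P 2) + of_bool (P 3)"
  "card {s\<in>{1..4::nat}. P s} = of_bool (P 1) + of_bool (P 2) + of_bool (P 3) + of_bool (P 4)"
proof -
  have e: "card {s\<in>A. P s} = (\<Sum>s\<in>A. of_bool (P s))" if "finite A" for A :: "nat set"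
    using that by (simp add: sum.If_cases Int_def)
  show "card {s\<in>{1..2::nat}. P s} = of_bool (P 1) + of_bool (P 2)"
    unfolding e[OF finite_atLeastAtMost] by (simp add: numeral_eq_Suc)
  show "card {s\<in>{1..3::nat}. P s} = of_bool (P 1) + of_bool (P 2) + of_bool (P 3)"
    unfolding e[OF finite_atLeastAtMost] by (simp add: numeral_eq_Suc)
  show "card {s\<in>{1..4::nat}. P s} = of_bool (P 1) + of_bool (P 2) + of_bool (P 3) + of_bool (P 4)"
    unfolding e[OF finite_atLeastAtMost] by (simp add: numeral_eq_Suc)
qed

lemma day_card_le:
  assumes "perm_seq N n \<pi>" "s \<in> {1..n}" "c \<le> n"
  shows "card {i\<in>N. \<pi> s i \<le> c} = c"
proof -
  have b: "bij_betw (\<pi> s) N {1..n}" using assms unfolding perm_seq_def by auto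
  have "{i\<in>N. \<pi> s i \<le> c} = {i\<in>N. \<pi> s i \<in> {1..c}}" using b by (auto simp: bij_betw_def)
  then show ?thesis using day_card[OF assms(1,2), of "{1..c}"] assms(3) by simp
qed

theorem mainTheorem2:
  fixes N :: "'a set" and k :: nat
  assumes "k \<ge> 2" and "finite N" and "card N = 6 * k"
  shows "\<not> (\<exists>\<pi>. balanced N (6 * k) \<pi>)"
proof
  assume "\<exists>\<pi>. balanced N (6 * k) \<pi>"
  then obtain \<pi> where ps: "perm_seq N (6 * k) \<pi>" and
    bal: "\<forall>t\<in>{1..6*k}. \<forall>i\<in>N. \<forall>j\<in>{1..t}.
        int (kth_smallest (Zset \<pi> i t) j) \<le> \<lceil>real (j * (6*k)) / real t\<rceil>"
    unfolding balanced_def by blast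
  have k2: "k \<ge> 2" using assms(1) .
  have cnt: "j \<le> card {s\<in>{1..t}. \<pi> s i \<le> c}"
    if "t \<in> {1..6*k}" "i \<in> N" "j \<in> {1..t}" "\<And>x. x * t < j * (6*k) + t \<Longrightarrow> x \<le> c" for t j c i
  proof -
    have "int (kth_smallest (Zset \<pi> i t) j) \<le> \<lceil>real (j * (6*k)) / real t\<rceil>"
      using bal that(1-3) by blast
    then have "kth_smallest (Zset \<pi> i t) j * t < j * (6*k) + t"
      by (rule ceil_bound) (use that in auto)
    then have "kth_smallest (Zset \<pi> i t) j \<le> c" using that(4) by blast
    then show ?thesis by (rule count_le) (use that in auto)
  qed
  have g: "1 \<le> card {s\<in>{1..2}. \<pi> s i \<le> 3*k}" if "i \<in> N" for i
    by (rule cnt) (use that k2 in auto)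
  have e: "1 \<le> card {s\<in>{1..3}. \<pi> s i \<le> 2*k}" if "i \<in> N" for i
    by (rule cnt) (use that k2 in auto)
  have f: "2 \<le> card {s\<in>{1..4}. \<pi> s i \<le> 3*k}" if "i \<in> N" for i
    by (rule cnt) (use that k2 in auto)
  have h: "1 \<le> card {s\<in>{1..4}. \<pi> s i \<le> (3*k+1) div 2}" if "i \<in> N" for i
    by (rule cnt) (use that k2 in auto)
  have sg: "(\<Sum>i\<in>N. card {s\<in>{1..2}. \<pi> s i \<le> 3*k}) = 1 * card N"
  proof -
    have "(\<Sum>i\<in>N. card {s\<in>{1..2}. \<pi> s i \<le> 3*k}) = (\<Sum>s\<in>{1..2}. card {i\<in>N. \<pi> s i \<le> 3*k})"
      using assms(2) by (rule sum_swap_card) simp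
    also have "\<dots> = (\<Sum>s\<in>{1..2::nat}. 3*k)"
      by (rule sum.cong) (use day_card_le[OF ps] k2 in auto)
    finally show ?thesis using assms(3) by simp
  qed
  have sf: "(\<Sum>i\<in>N. card {s\<in>{1..4}. \<pi> s i \<le> 3*k}) = 2 * card N"
  proof -
    have "(\<Sum>i\<in>N. card {s\<in>{1..4}. \<pi> s i \<le> 3*k}) = (\<Sum>s\<in>{1..4}. card {i\<in>N. \<pi> s i \<le> 3*k})"
      using assms(2) by (rule sum_swap_card) simp
    also have "\<dots> = (\<Sum>s\<in>{1..4::nat}. 3*k)"
      by (rule sum.cong) (use day_card_le[OF ps] k2 in auto)
    finally show ?thesis using assms(3) by simp
  qed
  have g1: "card {s\<in>{1..2}. \<pi> s i \<le> 3*k} = 1" if "i \<in> N" for i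
    using all_eq[OF assms(2) sg] g that by blast
  have f2: "card {s\<in>{1..4}. \<pi> s i \<le> 3*k} = 2" if "i \<in> N" for i
    using all_eq[OF assms(2) sf] f that by blast
  define Z1 where "Z1 = {i\<in>N. \<pi> 1 i \<in> {2*k+1..3*k}}"
  define Z2 where "Z2 = {i\<in>N. \<pi> 2 i \<in> {2*k+1..3*k}}"
  have cZ1: "card Z1 = k" unfolding Z1_def using day_card[OF ps, of 1 "{2*k+1..3*k}"] k2 by simp
  have cZ2: "card Z2 = k" unfolding Z2_def using day_card[OF ps, of 2 "{2*k+1..3*k}"] k2 by simp
  have disj: "Z1 \<inter> Z2 = {}"
  proof (rule ccontr)
    assume "Z1 \<inter> Z2 \<noteq> {}"
    then obtain i where "i \<in> Z1" "i \<in> Z2" by blast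
    then show False using g1[of i] unfolding Z1_def Z2_def card_days by auto
  qed
  have fin: "finite Z1" "finite Z2" using assms(2) unfolding Z1_def Z2_def by auto
  have cZ: "card (Z1 \<union> Z2) = 2 * k" using card_Un_disjoint[OF fin disj] cZ1 cZ2 by simp
  have key: "\<pi> 3 i \<in> {1..(3*k+1) div 2}" if "i \<in> Z1 \<union> Z2" for i
  proof -
    have d: "(3*k+1) div 2 \<le> 2*k" by linarith
    have iN: "i \<in> N" using that unfolding Z1_def Z2_def by auto
    have b3: "bij_betw (\<pi> 3) N {1..6*k}" using ps k2 unfolding perm_seq_def by auto
    have "\<pi> 3 i \<ge> 1" using b3 iN unfolding bij_betw_def by auto
    moreover have "\<pi> 3 i \<le> (3*k+1) div 2"
      using d that g1[OF iN] e[OF iN] f2[OF iN] h[OF iN] k2 unfolding Z1_def Z2_def card_days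
      by (auto simp: of_bool_def split: if_splits)
    ultimately show ?thesis by simp
  qed
  have inj: "inj_on (\<pi> 3) (Z1 \<union> Z2)"
  proof -
    have b3: "bij_betw (\<pi> 3) N {1..6*k}" using ps k2 unfolding perm_seq_def by auto
    then show ?thesis unfolding Z1_def Z2_def bij_betw_def by (auto intro: inj_on_subset)
  qed
  have "card (Z1 \<union> Z2) \<le> card {1..(3*k+1) div 2}"
    using card_inj_on_le[OF inj _ finite_atLeastAtMost] key by blast
  then have "2 * k \<le> (3*k+1) div 2" using cZ by simp
  then show False using k2 by linarith
qed

end
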